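(* Let $M\in\mathcal{M}$ be delay-free with $\mathrm{Supp}(M)=\{i_1,\dots,i_k\}$, where $i_1<\dots<i_k$, and denote the rows of $M$ by $M_1,\dots,M_n$. Then the following are equivalent: (a) The $k\times n$ matrix $\widetilde M$ with rows $M_{i_1},\dots,M_{i_k}$ is basic. (b) There exist row vectors $\widehat M_i\in\mathbb{F}[t]^{1\times n}$ for $i\in\{1,\dots,n\}\setminus\{i_1,\dots,i_k\}$ such that the matrix $N\in\mathbb{F}[t]^{n\times n}$ whose $i$-th row is $M_i$ for $i\in\{i_1,\dots,i_k\}$ and $\widehat M_i$ otherwise is a unit of the ring $\mathcal{M}$.
   Context: Let $\mathbb{F}$ be a finite field with $q$ elements and $n\geq 2$ a divisor of $q-1$. $\mathcal{M}=\{(m_{ab})\in\mathbb{F}[t]^{n\times n}\mid m_{ab}(0)=0\text{ for }1\le b<a\le n\}$, a subring of $\mathbb{F}[t]^{n\times n}$. For $M=(m_{ab})\in\mathcal{M}$, $\mathrm{Supp}(M)$ is the set of indices $a$ such that the $a$-th row of $M$ is nonzero, and $M$ is called delay-free if $m_{aa}(0)\ne0$ for all $a\in\mathrm{Supp}(M)$. A matrix $G\in\mathbb{F}[t]^{k\times n}$ is basic if $\mathrm{rank}\,G(\lambda)=k$ for all $\lambda$ in an algebraic closure of $\mathbb{F}$ (equivalently, its $k\times k$ minors are coprime). *)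

theory Defs
  imports "Jordan_Normal_Form.Determinant" "Jordan_Normal_Form.DL_Submatrix"
    "HOL-Computational_Algebra.Polynomial"
begin

text \<open>Matrices over F[t] are 'a poly mat; indices are 0-based (row a of the paper is row a-1 here).\<close>

definition calM :: "nat \<Rightarrow> 'a::field poly mat set" where
  "calM n = {M \<in> carrier_mat n n. \<forall>a<n. \<forall>b<a. poly (M $$ (a, b)) 0 = 0}"

definition unit_calM :: "nat \<Rightarrow> 'a::field poly mat \<Rightarrow> bool" where
  "unit_calM n N \<longleftrightarrow> N \<in> calM n \<and>
     (\<exists>N' \<in> calM n. N * N' = 1\<^sub>m n \<and> N' * N = 1\<^sub>m n)"

definition Supp :: "'a::zero mat \<Rightarrow> nat set" where
  "Supp M = {a. a < dim_row M \<and> row M a \<noteq> 0\<^sub>v (dim_col M)}"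

definition delay_free :: "'a::field poly mat \<Rightarrow> bool" where
  "delay_free M \<longleftrightarrow> (\<forall>a \<in> Supp M. poly (M $$ (a, a)) 0 \<noteq> 0)"

definition basic :: "'a::field poly mat \<Rightarrow> bool" where
  "basic G \<longleftrightarrow> (\<forall>d :: 'a poly.
     (\<forall>J. J \<subseteq> {0..<dim_col G} \<and> card J = dim_row G \<longrightarrow>
          d dvd det (submatrix G UNIV J)) \<longrightarrow> is_unit d)"

end

theory Submission
  imports Defs
begin


lemma sub_carrier:
  assumes "A \<in> carrier_mat r c" "I \<subseteq> {0..<r}" "J \<subseteq> {0..<c}"
  shows "submatrix A I J \<in> carrier_mat (card I) (card J)"
proof -
  have "{i. i < r \<and> i \<in> I} = I" "{j. j < c \<and> j \<in> J} = J" using assms by auto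
  thus ?thesis using assms unfolding carrier_mat_def by (simp add: dim_submatrix)
qed

lemma sub_idx:
  assumes "A \<in> carrier_mat r c" "I \<subseteq> {0..<r}" "J \<subseteq> {0..<c}" "i < card I" "j < card J"
  shows "submatrix A I J $$ (i,j) = A $$ (pick I i, pick J j)"
proof -
  have "{i. i < r \<and> i \<in> I} = I" "{j. j < c \<and> j \<in> J} = J" using assms by auto
  thus ?thesis using assms by (intro submatrix_index) auto
qed

lemma sub_carrier_rU:
  assumes "A \<in> carrier_mat r c" "I \<subseteq> {0..<r}"
  shows "submatrix A I UNIV \<in> carrier_mat (card I) c"
proof -
  have "{i. i < r \<and> i \<in> I} = I" "{j. j < c \<and> j \<in> UNIV} = {0..<c}" using assms by auto
  thus ?thesis using assms unfolding carrier_mat_def by (simp add: dim_submatrix)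
qed

lemma sub_idx_rU:
  assumes "A \<in> carrier_mat r c" "I \<subseteq> {0..<r}" "i < card I" "j < c"
  shows "submatrix A I UNIV $$ (i,j) = A $$ (pick I i, j)"
proof -
  have "{i. i < r \<and> i \<in> I} = I" "{j. j < c \<and> j \<in> UNIV} = {0..<c}" using assms by auto
  thus ?thesis using assms by (subst submatrix_index) (auto simp: pick_UNIV)
qed

lemma sub_carrier_cU:
  assumes "A \<in> carrier_mat r c" "J \<subseteq> {0..<c}"
  shows "submatrix A UNIV J \<in> carrier_mat r (card J)"
proof -
  have "{i. i < c \<and> i \<in> J} = J" "{j. j < r \<and> j \<in> UNIV} = {0..<r}" using assms by auto
  thus ?thesis using assms unfolding carrier_mat_def by (simp add: dim_submatrix)
qed

lemma sub_idx_cU: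
  assumes "A \<in> carrier_mat r c" "J \<subseteq> {0..<c}" "i < r" "j < card J"
  shows "submatrix A UNIV J $$ (i,j) = A $$ (i, pick J j)"
proof -
  have "{i. i < c \<and> i \<in> J} = J" "{j. j < r \<and> j \<in> UNIV} = {0..<r}" using assms by auto
  thus ?thesis using assms by (subst submatrix_index) (auto simp: pick_UNIV)
qed

lemma CB_rows:
  fixes A B :: "'a::comm_ring_1 mat"
  assumes A: "A \<in> carrier_mat k n" and B: "B \<in> carrier_mat n k"
    and hyp: "\<And>J. J \<subseteq> {0..<n} \<Longrightarrow> card J = k \<Longrightarrow> d dvd det (submatrix B J UNIV)"
  shows "d dvd det (A * B)"
proof -
  let ?U = "{0..<n}"
  let ?F = "{f. (\<forall>i\<in>{0..<k}. f i \<in> ?U) \<and> (\<forall>i. i \<notin> {0..<k} \<longrightarrow> f i = i)}"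
  have "det (A * B) = (\<Sum>f\<in>?F. det (mat\<^sub>r k k (\<lambda>i. A $$ (i, f i) \<cdot>\<^sub>v row B (f i))))"
    unfolding mat_mul_finsum_alt[OF A B]
    by (rule det_linear_rows_sum, insert A B, auto)
  also have "d dvd \<dots>"
  proof (rule dvd_sum)
    fix f assume f: "f \<in> ?F"
    have rows: "(\<lambda>i. row B (f i)) \<in> {0..<k} \<rightarrow> carrier_vec k" using B by auto
    have "det (mat\<^sub>r k k (\<lambda>i. A $$ (i, f i) \<cdot>\<^sub>v row B (f i)))
       = prod (\<lambda>i. A $$ (i, f i)) {0..<k} * det (mat\<^sub>r k k (\<lambda>i. row B (f i)))"
      by (rule det_rows_mul[OF rows])
    also have "d dvd \<dots>"
    proof (rule dvd_mult)
      let ?R = "mat\<^sub>r k k (\<lambda>i. row B (f i))"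
      have R: "?R \<in> carrier_mat k k" by auto
      show "d dvd det ?R"
      proof (cases "inj_on f {0..<k}")
        case False
        then obtain i j where ij: "f i = f j" "i \<noteq> j" "i < k" "j < k"
          unfolding inj_on_def by auto
        have "det ?R = 0" by (rule det_identical_rows[OF R ij(2-4)], insert ij, auto)
        thus ?thesis by simp
      next
        case True
        define J where "J = f ` {0..<k}"
        have J: "J \<subseteq> {0..<n}" using f unfolding J_def by auto
        have cJ: "card J = k" unfolding J_def using card_image[OF True] by simp
        have fJ: "finite J" using J finite_subset by blast
        define p where "p i = (if i < k then card {a\<in>J. a < f i} else i)" for i
        have pk: "p i < k" if "i < k" for i
        proof -
          have "{a\<in>J. a < f i} \<subset> J" using that unfolding J_def by auto
          hence "card {a\<in>J. a < f i} < card J" using fJ by (simp add: psubset_card_mono)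
          thus ?thesis using that cJ unfolding p_def by simp
        qed
        have pickp: "pick J (p i) = f i" if "i < k" for i
          using that pick_card_in_set[of "f i" J] unfolding p_def J_def by auto
        have injp: "inj_on p {0..<k}"
        proof
          fix x y assume "x \<in> {0..<k}" "y \<in> {0..<k}" "p x = p y"
          hence "f x = f y" using pickp by (metis atLeastLessThan_iff)
          thus "x = y" using True \<open>x \<in> _\<close> \<open>y \<in> _\<close> unfolding inj_on_def by blast
        qed
        have perm: "p permutes {0..<k}"
          by (rule inj_on_nat_permutes[OF injp], insert pk, auto simp: p_def)
        define Sb where "Sb = submatrix B J UNIV"
        have Sb: "Sb \<in> carrier_mat k k" unfolding Sb_def
          using sub_carrier_rU[OF B J] cJ by auto
        have "?R = mat k k (\<lambda>(i, j). Sb $$ (p i, j))"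
        proof (rule eq_matI)
          fix i j assume ij: "i < dim_row (mat k k (\<lambda>(i, j). Sb $$ (p i, j)))"
            "j < dim_col (mat k k (\<lambda>(i, j). Sb $$ (p i, j)))"
          hence ij: "i < k" "j < k" by auto
          have "Sb $$ (p i, j) = B $$ (pick J (p i), j)"
            unfolding Sb_def using sub_idx_rU[OF B J, of "p i" j] cJ pk ij by auto
          then show "?R $$ (i,j) = mat k k (\<lambda>(i, j). Sb $$ (p i, j)) $$ (i,j)"
            using ij B pickp J f by auto
        qed auto
        hence "det ?R = of_int (sign p) * det Sb"
          using det_permute_rows[OF Sb perm] by simp
        moreover have "d dvd det Sb" unfolding Sb_def by (rule hyp[OF J cJ])
        ultimately show ?thesis by simp
      qed
    qed
    finally show "d dvd det (mat\<^sub>r k k (\<lambda>i. A $$ (i, f i) \<cdot>\<^sub>v row B (f i)))" .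
  qed
  finally show ?thesis .
qed

lemma sub_transpose:
  assumes G: "G \<in> carrier_mat k n" and J: "J \<subseteq> {0..<n}"
  shows "submatrix G\<^sup>T J UNIV = (submatrix G UNIV J)\<^sup>T"
proof -
  have GT: "G\<^sup>T \<in> carrier_mat n k" using G by auto
  have pJ: "\<And>i. i < card J \<Longrightarrow> pick J i < n" using pick_in_set_le J by (meson atLeastLessThan_iff subsetD)
  show ?thesis
    by (rule eq_matI, insert sub_carrier_rU[OF GT J] sub_carrier_cU[OF G J] G pJ,
        auto simp: sub_idx_rU[OF GT J] sub_idx_cU[OF G J] pick_in_set_le intro!: index_transpose_mat)
qed

lemma CB_cols:
  fixes G W :: "'a::comm_ring_1 mat"
  assumes G: "G \<in> carrier_mat k n" and W: "W \<in> carrier_mat n k"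
    and hyp: "\<And>J. J \<subseteq> {0..<n} \<Longrightarrow> card J = k \<Longrightarrow> d dvd det (submatrix G UNIV J)"
  shows "d dvd det (G * W)"
proof -
  have "det (G * W) = det ((G * W)\<^sup>T)" using det_transpose[of "G*W" k] G W by auto
  also have "(G * W)\<^sup>T = W\<^sup>T * G\<^sup>T" using G W by (simp add: transpose_mult)
  also have "d dvd det (W\<^sup>T * G\<^sup>T)"
  proof (rule CB_rows)
    fix J assume J: "J \<subseteq> {0..<n}" "card J = k"
    have "det (submatrix G\<^sup>T J UNIV) = det (submatrix G UNIV J)"
      unfolding sub_transpose[OF G J(1)]
      by (rule det_transpose, insert sub_carrier_cU[OF G J(1)] J, auto)
    thus "d dvd det (submatrix G\<^sup>T J UNIV)" using hyp J by simp
  qed (insert G W, auto)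
  finally show ?thesis .
qed

lemma sub_mult_cols:
  assumes G: "G \<in> carrier_mat k n" and U: "U \<in> carrier_mat n n" and J: "J \<subseteq> {0..<n}"
  shows "submatrix (G * U) UNIV J = G * submatrix U UNIV J"
proof -
  have GU: "G * U \<in> carrier_mat k n" using G U by auto
  have SU: "submatrix U UNIV J \<in> carrier_mat n (card J)" by (rule sub_carrier_cU[OF U J])
  show ?thesis
  proof (rule eq_matI)
    fix i j assume ij: "i < dim_row (G * submatrix U UNIV J)" "j < dim_col (G * submatrix U UNIV J)"
    hence ij: "i < k" "j < card J" using G SU by auto
    have pj: "pick J j < n" using pick_in_set_le[OF ij(2)] J by auto
    have "col (submatrix U UNIV J) j = col U (pick J j)"
      by (rule eq_vecI, insert SU U ij pj, auto simp: sub_idx_cU[OF U J])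
    thus "submatrix (G * U) UNIV J $$ (i, j) = (G * submatrix U UNIV J) $$ (i, j)"
      using sub_idx_cU[OF GU J ij] G U SU ij pj by auto
  qed (insert sub_carrier_cU[OF GU J] G SU, auto)
qed

lemma minors_mult:
  fixes G U :: "'a::comm_ring_1 mat"
  assumes G: "G \<in> carrier_mat k n" and U: "U \<in> carrier_mat n n"
    and hyp: "\<And>J. J \<subseteq> {0..<n} \<Longrightarrow> card J = k \<Longrightarrow> d dvd det (submatrix G UNIV J)"
    and J: "J \<subseteq> {0..<n}" "card J = k"
  shows "d dvd det (submatrix (G * U) UNIV J)"
  unfolding sub_mult_cols[OF G U J(1)]
  by (rule CB_cols[OF G _ hyp], insert sub_carrier_cU[OF U J(1)] J, auto)

definition invm :: "nat \<Rightarrow> 'a::comm_ring_1 mat \<Rightarrow> bool" where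
  "invm n U \<longleftrightarrow> U \<in> carrier_mat n n \<and> (\<exists>V \<in> carrier_mat n n. U * V = 1\<^sub>m n \<and> V * U = 1\<^sub>m n)"

lemma invm_one: "invm n (1\<^sub>m n)"
  unfolding invm_def by (intro conjI bexI[of _ "1\<^sub>m n"]) auto

lemma invm_mult:
  assumes "invm n U1" "invm n U2" shows "invm n (U1 * U2)"
proof -
  obtain V1 V2 where U: "U1 \<in> carrier_mat n n" "U2 \<in> carrier_mat n n"
    and V: "V1 \<in> carrier_mat n n" "V2 \<in> carrier_mat n n"
    and e: "U1 * V1 = 1\<^sub>m n" "V1 * U1 = 1\<^sub>m n" "U2 * V2 = 1\<^sub>m n" "V2 * U2 = 1\<^sub>m n"
    using assms unfolding invm_def by blast
  have "U1 * U2 * (V2 * V1) = U1 * (U2 * (V2 * V1))" using U V by (intro assoc_mult_mat) auto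
  also have "U2 * (V2 * V1) = U2 * V2 * V1" using U V by (intro assoc_mult_mat[symmetric]) auto
  also have "U1 * (U2 * V2 * V1) = U1 * (U2 * V2) * V1" using U V by (intro assoc_mult_mat[symmetric]) auto
  also have "\<dots> = 1\<^sub>m n" using e U V by simp
  finally have 1: "U1 * U2 * (V2 * V1) = 1\<^sub>m n" .
  have "V2 * V1 * (U1 * U2) = V2 * (V1 * (U1 * U2))" using U V by (intro assoc_mult_mat) auto
  also have "V1 * (U1 * U2) = V1 * U1 * U2" using U V by (intro assoc_mult_mat[symmetric]) auto
  also have "V2 * (V1 * U1 * U2) = V2 * (V1 * U1) * U2" using U V by (intro assoc_mult_mat[symmetric]) auto
  also have "\<dots> = 1\<^sub>m n" using e U V by simp
  finally have 2: "V2 * V1 * (U1 * U2) = 1\<^sub>m n" .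
  show ?thesis unfolding invm_def using 1 2 U V by (intro conjI bexI[of _ "V2 * V1"]) auto
qed

lemma invm_addrow:
  assumes "k < n" "l < n" "k \<noteq> l"
  shows "invm n (addrow_mat n (a::'a::comm_ring_1) k l)"
  unfolding invm_def
  using addrow_mat_inv[OF assms, of a] addrow_mat_inv[OF assms, of "-a"]
  by (intro conjI bexI[of _ "addrow_mat n (-a) k l"]) auto

lemma invm_swap:
  assumes "k < n" "l < n"
  shows "invm n (swaprows_mat n k l :: 'a::comm_ring_1 mat)"
  unfolding invm_def using swaprows_mat_inv[OF assms]
  by (intro conjI bexI[of _ "swaprows_mat n k l"]) auto

lemma euclid:
  fixes X :: "'a::field poly mat"
  assumes X: "X \<in> carrier_mat r n" and i: "i < r" and F: "F \<subseteq> {0..<n}" and c: "c \<in> F"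
  shows "\<exists>U. invm n U \<and> (\<forall>j\<in>F. j \<noteq> c \<longrightarrow> (X * U) $$ (i,j) = 0)
    \<and> (\<forall>i'<r. (\<forall>j\<in>F. X $$ (i',j) = 0) \<longrightarrow> row (X * U) i' = row X i')"
  using X
proof (induction "\<Sum>j\<in>F. (if X $$ (i,j) = 0 then 0 else Suc (degree (X $$ (i,j))))"
    arbitrary: X rule: less_induct)
  case less
  note X = less.prems
  have fF: "finite F" using F finite_subset by blast
  show ?case
  proof (cases "\<forall>j\<in>F. j \<noteq> c \<longrightarrow> X $$ (i,j) = 0")
    case True
    thus ?thesis using X by (intro exI[of _ "1\<^sub>m n"]) (auto simp: invm_one)
  next
    case False
    then obtain j0 where j0: "j0 \<in> F" "X $$ (i,j0) \<noteq> 0" by auto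
    obtain p where p: "p \<in> F \<and> X $$ (i,p) \<noteq> 0"
      and pmin: "\<And>j. j \<in> F \<and> X $$ (i,j) \<noteq> 0 \<Longrightarrow> degree (X $$ (i,p)) \<le> degree (X $$ (i,j))"
      using ex_has_least_nat[of "\<lambda>j. j \<in> F \<and> X $$ (i,j) \<noteq> 0" j0 "\<lambda>j. degree (X $$ (i,j))"] j0
      by blast
    have pn: "p < n" using p F by auto
    show ?thesis
    proof (cases "\<exists>j\<in>F. j \<noteq> p \<and> X $$ (i,j) \<noteq> 0")
      case True
      then obtain j where j: "j \<in> F" "j \<noteq> p" "X $$ (i,j) \<noteq> 0" by auto
      have jn: "j < n" using j F by auto
      define q where "q = X $$ (i,j) div X $$ (i,p)"
      define E where "E = addrow_mat n (-q) p j"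
      define X1 where "X1 = X * E"
      have X1a: "X1 = addcol (-q) j p X" unfolding X1_def E_def by (rule addcol_mat[OF X pn, symmetric])
      have X1: "X1 \<in> carrier_mat r n" unfolding X1_def E_def using X by auto
      have X1e: "X1 $$ (a,b) = (if b = j then - q * X $$ (a,p) + X $$ (a,b) else X $$ (a,b))"
        if "a < r" "b < n" for a b
        unfolding X1a using that X by auto
      have X1ij: "X1 $$ (i,j) = X $$ (i,j) mod X $$ (i,p)"
        using X1e[OF i jn] unfolding q_def by (simp add: minus_div_mult_eq_mod[symmetric] algebra_simps)
      let ?w = "\<lambda>Y b. if Y $$ (i,b) = 0 then 0 else Suc (degree (Y $$ (i,b)))"
      have "(\<Sum>b\<in>F. ?w X1 b) < (\<Sum>b\<in>F. ?w X b)"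
      proof (rule sum_strict_mono_ex1[OF fF])
        show "\<forall>b\<in>F. ?w X1 b \<le> ?w X b"
        proof
          fix b assume b: "b \<in> F"
          hence bn: "b < n" using F by auto
          show "?w X1 b \<le> ?w X b"
          proof (cases "b = j")
            case True
            have "X $$ (i,j) mod X $$ (i,p) = 0 \<or> degree (X $$ (i,j) mod X $$ (i,p)) < degree (X $$ (i,p))"
              using degree_mod_less p by blast
            thus ?thesis using True X1ij pmin[of j] j by auto
          qed (insert X1e[OF i bn], auto)
        qed
        show "\<exists>b\<in>F. ?w X1 b < ?w X b"
        proof (intro bexI[OF _ j(1)])
          have "X $$ (i,j) mod X $$ (i,p) = 0 \<or> degree (X $$ (i,j) mod X $$ (i,p)) < degree (X $$ (i,p))"
            using degree_mod_less p by blast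
          thus "?w X1 j < ?w X j" using X1ij pmin[of j] j by auto
        qed
      qed
      from less.hyps[OF this X1] obtain U1 where U1: "invm n U1"
        "\<forall>j\<in>F. j \<noteq> c \<longrightarrow> (X1 * U1) $$ (i,j) = 0"
        "\<forall>i'<r. (\<forall>j\<in>F. X1 $$ (i',j) = 0) \<longrightarrow> row (X1 * U1) i' = row X1 i'" by blast
      have U1c: "U1 \<in> carrier_mat n n" using U1 unfolding invm_def by auto
      have E: "invm n E" unfolding E_def by (rule invm_addrow[OF pn jn], insert j, auto)
      have Ec: "E \<in> carrier_mat n n" unfolding E_def by auto
      have XEU: "X * (E * U1) = X1 * U1" unfolding X1_def using X Ec U1c by (simp add: assoc_mult_mat)
      have rowX1: "row X1 i' = row X i'" if "i' < r" "\<forall>j\<in>F. X $$ (i',j) = 0" for i'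
        by (rule eq_vecI, insert that X X1 X1e p, auto)
      show ?thesis
      proof (intro exI[of _ "E * U1"] conjI allI impI ballI)
        show "invm n (E * U1)" by (rule invm_mult[OF E U1(1)])
        fix j' assume "j' \<in> F" "j' \<noteq> c"
        thus "(X * (E * U1)) $$ (i,j') = 0" unfolding XEU using U1(2) by auto
      next
        fix i' assume i': "i' < r" "\<forall>j\<in>F. X $$ (i',j) = 0"
        have "\<forall>j\<in>F. X1 $$ (i',j) = 0"
        proof
          fix ja assume "ja \<in> F"
          hence "ja < n" using F by auto
          thus "X1 $$ (i',ja) = 0" using X1e[OF i'(1) \<open>ja < n\<close>] i' p \<open>ja \<in> F\<close> by auto
        qed
        thus "row (X * (E * U1)) i' = row X i'" unfolding XEU using U1(3) i' rowX1 by auto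
      qed
    next
      case False
      have cn: "c < n" using c F by auto
      define P where "P = (swaprows_mat n c p :: 'a poly mat)"
      have XP: "X * P = swapcols c p X" unfolding P_def by (rule swapcols_mat[OF X cn pn, symmetric])
      show ?thesis
      proof (intro exI[of _ P] conjI allI impI ballI)
        show "invm n P" unfolding P_def by (rule invm_swap[OF cn pn])
        fix j' assume j': "j' \<in> F" "j' \<noteq> c"
        hence "j' < n" using F by auto
        thus "(X * P) $$ (i,j') = 0" unfolding XP using X i j' False c by auto
      next
        fix i' assume i': "i' < r" "\<forall>j\<in>F. X $$ (i',j) = 0"
        show "row (X * P) i' = row X i'" unfolding XP
          by (rule eq_vecI, insert X i' c p, auto)
      qed
    qed
  qed
qed

lemma reduce_aux:
  fixes M :: "'a::field poly mat"
  assumes M: "M \<in> carrier_mat n n" and S: "S \<subseteq> {0..<n}"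
  shows "t \<le> n \<Longrightarrow> \<exists>U. invm n U \<and> (\<forall>s\<in>S. s < t \<longrightarrow> (\<forall>j<n. (j \<notin> S \<or> s < j) \<longrightarrow> (M * U) $$ (s,j) = 0))"
proof (induction t)
  case 0
  thus ?case by (intro exI[of _ "1\<^sub>m n"]) (auto simp: invm_one)
next
  case (Suc t)
  then obtain U where U: "invm n U"
    and inv: "\<forall>s\<in>S. s < t \<longrightarrow> (\<forall>j<n. (j \<notin> S \<or> s < j) \<longrightarrow> (M * U) $$ (s,j) = 0)" by auto
  have Uc: "U \<in> carrier_mat n n" using U unfolding invm_def by auto
  show ?case
  proof (cases "t \<in> S")
    case False
    show ?thesis
    proof (intro exI[of _ U] conjI U ballI impI allI)
      fix s j assume "s \<in> S" "s < Suc t" "j < n" "j \<notin> S \<or> s < j"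
      moreover hence "s < t" using False by (cases "s = t") auto
      ultimately show "(M * U) $$ (s,j) = 0" using inv by auto
    qed
  next
    case True
    define X where "X = M * U"
    have X: "X \<in> carrier_mat n n" unfolding X_def using M Uc by auto
    define F where "F = {j. j < n \<and> (j \<notin> S \<or> t \<le> j)}"
    have F: "F \<subseteq> {0..<n}" unfolding F_def by auto
    have tF: "t \<in> F" unfolding F_def using Suc.prems by auto
    from euclid[OF X _ F tF, of t] Suc.prems obtain U2 where U2: "invm n U2"
      "\<forall>j\<in>F. j \<noteq> t \<longrightarrow> (X * U2) $$ (t,j) = 0"
      "\<forall>i'<n. (\<forall>j\<in>F. X $$ (i',j) = 0) \<longrightarrow> row (X * U2) i' = row X i'" by auto
    have U2c: "U2 \<in> carrier_mat n n" using U2 unfolding invm_def by auto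
    have MU: "M * (U * U2) = X * U2" unfolding X_def using M Uc U2c by (simp add: assoc_mult_mat)
    show ?thesis
    proof (intro exI[of _ "U * U2"] conjI ballI impI allI)
      show "invm n (U * U2)" by (rule invm_mult[OF U U2(1)])
      fix s j assume s: "s \<in> S" "s < Suc t" and j: "j < n" "j \<notin> S \<or> s < j"
      show "(M * (U * U2)) $$ (s,j) = 0"
      proof (cases "s = t")
        case True
        hence "j \<in> F" "j \<noteq> t" using j \<open>t \<in> S\<close> unfolding F_def by auto
        thus ?thesis unfolding MU using U2(2) True by auto
      next
        case False
        hence st: "s < t" using s by auto
        have sn: "s < n" using s S by auto
        have "\<forall>j\<in>F. X $$ (s,j) = 0" using inv s st unfolding F_def X_def by auto
        hence rr: "row (X * U2) s = row X s" using U2(3) sn by auto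
        have "(X * U2) $$ (s,j) = X $$ (s,j)"
          using arg_cong[OF rr, of "\<lambda>v. v $ j"] X U2c j(1) sn by auto
        also have "\<dots> = 0" using inv s st j unfolding X_def by auto
        finally show ?thesis unfolding MU .
      qed
    qed
  qed
qed

lemma reduce:
  fixes M :: "'a::field poly mat"
  assumes M: "M \<in> carrier_mat n n" and S: "S \<subseteq> {0..<n}"
  shows "\<exists>U. invm n U \<and> (\<forall>s\<in>S. \<forall>j<n. (j \<notin> S \<or> s < j) \<longrightarrow> (M * U) $$ (s,j) = 0)"
proof -
  obtain U where "invm n U" "\<forall>s\<in>S. s < n \<longrightarrow> (\<forall>j<n. (j \<notin> S \<or> s < j) \<longrightarrow> (M * U) $$ (s,j) = 0)"
    using reduce_aux[OF M S, of n] by auto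
  thus ?thesis using S by (intro exI[of _ U]) auto
qed



interpretation ev0: comm_ring_hom "(\<lambda>p::'a::comm_ring_1 poly. poly p 0)"
  by unfold_locales auto
interpretation cst: comm_ring_hom "(\<lambda>x::'a::comm_ring_1. [:x:])"
  by unfold_locales (auto simp: one_pCons)

lemma prod_list_upt: "prod_list (map f [0..<k]) = prod f {0..<k}"
  by (induction k) auto

lemma det_diag_prod: "A \<in> carrier_mat n n \<Longrightarrow> prod_list (diag_mat A) = (\<Prod>i\<in>{0..<n}. A $$ (i,i))"
  unfolding diag_mat_def by (simp add: prod_list_upt)

lemma assoc4:
  assumes "A \<in> carrier_mat n n" "B \<in> carrier_mat n n" "C \<in> carrier_mat n n" "D \<in> carrier_mat n n"
  shows "A * B * (C * D) = A * (B * C) * D"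
proof -
  have "A * B * (C * D) = A * (B * (C * D))" using assms by (intro assoc_mult_mat) auto
  also have "B * (C * D) = B * C * D" using assms by (intro assoc_mult_mat[symmetric]) auto
  also have "A * (B * C * D) = A * (B * C) * D" using assms by (intro assoc_mult_mat[symmetric]) auto
  finally show ?thesis .
qed

lemma unit_det_invm:
  fixes Q :: "'a::comm_ring_1 mat"
  assumes Q: "Q \<in> carrier_mat n n" and u: "det Q dvd 1"
  shows "invm n Q"
proof -
  obtain e where e: "1 = det Q * e" using u by (auto elim: dvdE)
  define Q' where "Q' = e \<cdot>\<^sub>m adj_mat Q"
  have A: "adj_mat Q \<in> carrier_mat n n" using adj_mat[OF Q] by auto
  have "Q * Q' = e \<cdot>\<^sub>m (Q * adj_mat Q)" unfolding Q'_def using Q A by (simp add: mult_smult_distrib)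
  also have "\<dots> = 1\<^sub>m n" using adj_mat[OF Q] e by (intro eq_matI) (auto simp: algebra_simps)
  finally have 1: "Q * Q' = 1\<^sub>m n" .
  have "Q' * Q = e \<cdot>\<^sub>m (adj_mat Q * Q)" unfolding Q'_def using Q A by (simp add: mult_smult_assoc_mat)
  also have "\<dots> = 1\<^sub>m n" using adj_mat[OF Q] e by (intro eq_matI) (auto simp: algebra_simps)
  finally have 2: "Q' * Q = 1\<^sub>m n" .
  show ?thesis unfolding invm_def using 1 2 Q A Q'_def by (intro conjI bexI[of _ Q']) auto
qed

lemma upper_inv:
  fixes Y T :: "'a::field mat"
  assumes Y: "Y \<in> carrier_mat n n" and T: "T \<in> carrier_mat n n"
    and up: "\<And>a b. a < n \<Longrightarrow> b < a \<Longrightarrow> T $$ (a,b) = 0"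
    and dg: "\<And>a. a < n \<Longrightarrow> T $$ (a,a) \<noteq> 0"
    and YT: "Y * T = 1\<^sub>m n"
  shows "a < n \<Longrightarrow> b < a \<Longrightarrow> Y $$ (a,b) = 0"
proof (induction b arbitrary: a rule: less_induct)
  case (less b)
  have bn: "b < n" using less by auto
  have "(Y * T) $$ (a,b) = (\<Sum>l\<in>{0..<n}. Y $$ (a,l) * T $$ (l,b))"
    using Y T less bn by (auto simp: scalar_prod_def intro!: sum.cong)
  also have "\<dots> = (\<Sum>l\<in>{0..<n}. if l = b then Y $$ (a,b) * T $$ (b,b) else 0)"
  proof (rule sum.cong[OF refl])
    fix l assume l: "l \<in> {0..<n}"
    show "Y $$ (a,l) * T $$ (l,b) = (if l = b then Y $$ (a,b) * T $$ (b,b) else 0)"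
    proof (cases "l < b")
      case True thus ?thesis using less.IH[of l a] less.prems by auto
    next
      case False thus ?thesis using up[of l b] l by auto
    qed
  qed
  also have "\<dots> = Y $$ (a,b) * T $$ (b,b)" using bn by simp
  finally have "Y $$ (a,b) * T $$ (b,b) = 0" using YT less by auto
  thus ?case using dg[OF bn] by auto
qed

lemma fixup:
  fixes M N0 :: "'a::field poly mat"
  assumes M: "M \<in> carrier_mat n n" and S: "S \<subseteq> {0..<n}"
    and low: "\<And>a b. a \<in> S \<Longrightarrow> b < a \<Longrightarrow> poly (M $$ (a,b)) 0 = 0"
    and dg: "\<And>a. a \<in> S \<Longrightarrow> poly (M $$ (a,a)) 0 \<noteq> 0"
    and N0: "invm n N0" and rows: "\<And>s. s \<in> S \<Longrightarrow> row N0 s = row M s"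
  shows "\<exists>N \<in> carrier_mat n n. (\<forall>s\<in>S. row N s = row M s) \<and> unit_calM n N"
proof -
  obtain N0' where N0c: "N0 \<in> carrier_mat n n" and N0'c: "N0' \<in> carrier_mat n n"
    and e1: "N0 * N0' = 1\<^sub>m n" and e2: "N0' * N0 = 1\<^sub>m n" using N0 unfolding invm_def by auto
  define T0 :: "'a mat" where "T0 = mat n n (\<lambda>(i,j). if i \<in> S then poly (M $$ (i,j)) 0 else if i = j then 1 else 0)"
  have T0c: "T0 \<in> carrier_mat n n" unfolding T0_def by auto
  have T0up: "T0 $$ (a,b) = 0" if "a < n" "b < a" for a b
    using that low unfolding T0_def by auto
  have T0dg: "T0 $$ (a,a) \<noteq> 0" if "a < n" for a
    using that dg unfolding T0_def by auto
  have "det T0 = prod_list (diag_mat T0)"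
    by (rule det_upper_triangular[OF _ T0c], insert T0c T0up, auto simp: upper_triangular_def)
  also have "\<dots> \<noteq> 0" unfolding prod_list_zero_iff diag_mat_def using T0c T0dg by auto
  finally have dT0: "det T0 \<noteq> 0" .
  have "det T0 dvd 1" using dT0 by (simp add: dvd_field_iff)
  hence "invm n T0" by (rule unit_det_invm[OF T0c])
  then obtain T0i where T0ic: "T0i \<in> carrier_mat n n" and t1: "T0 * T0i = 1\<^sub>m n" and t2: "T0i * T0 = 1\<^sub>m n"
    unfolding invm_def by auto
  define C where "C = T0 * ev0.mat_hom N0'"
  define Ci where "Ci = ev0.mat_hom N0 * T0i"
  have Cc: "C \<in> carrier_mat n n" and Cic: "Ci \<in> carrier_mat n n"
    unfolding C_def Ci_def using T0c T0ic N0c N0'c by auto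
  have evN0c: "ev0.mat_hom N0 \<in> carrier_mat n n" and evN0'c: "ev0.mat_hom N0' \<in> carrier_mat n n"
    using N0c N0'c by auto
  have evN0N0': "ev0.mat_hom N0 * ev0.mat_hom N0' = 1\<^sub>m n"
    using ev0.mat_hom_mult[OF N0c N0'c, symmetric] e1 ev0.mat_hom_one by simp
  have evN0'N0: "ev0.mat_hom N0' * ev0.mat_hom N0 = 1\<^sub>m n"
    using ev0.mat_hom_mult[OF N0'c N0c, symmetric] e2 ev0.mat_hom_one by simp
  have CCi: "C * Ci = 1\<^sub>m n"
  proof -
    have "C * Ci = T0 * (ev0.mat_hom N0' * ev0.mat_hom N0) * T0i"
      unfolding C_def Ci_def by (rule assoc4[OF T0c evN0'c evN0c T0ic])
    thus ?thesis using evN0'N0 t1 T0c by simp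
  qed
  have CiC: "Ci * C = 1\<^sub>m n"
  proof -
    have "Ci * C = ev0.mat_hom N0 * (T0i * T0) * ev0.mat_hom N0'"
      unfolding C_def Ci_def by (rule assoc4[OF evN0c T0ic T0c evN0'c])
    thus ?thesis using evN0N0' t2 evN0c by simp
  qed
  define N where "N = cst.mat_hom C * N0"
  define Ni where "Ni = N0' * cst.mat_hom Ci"
  have cCc: "cst.mat_hom C \<in> carrier_mat n n" and cCic: "cst.mat_hom Ci \<in> carrier_mat n n"
    using Cc Cic by auto
  have Nc: "N \<in> carrier_mat n n" and Nic: "Ni \<in> carrier_mat n n"
    unfolding N_def Ni_def using cCc cCic N0c N0'c by auto
  have NNi: "N * Ni = 1\<^sub>m n"
  proof -
    have "N * Ni = cst.mat_hom C * (N0 * N0') * cst.mat_hom Ci"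
      unfolding N_def Ni_def by (rule assoc4[OF cCc N0c N0'c cCic])
    also have "\<dots> = cst.mat_hom (C * Ci)" using e1 cCc cst.mat_hom_mult[OF Cc Cic] by simp
    finally show ?thesis using CCi cst.mat_hom_one by simp
  qed
  have NiN: "Ni * N = 1\<^sub>m n"
  proof -
    have "Ni * N = N0' * (cst.mat_hom Ci * cst.mat_hom C) * N0"
      unfolding N_def Ni_def by (rule assoc4[OF N0'c cCic cCc N0c])
    also have "cst.mat_hom Ci * cst.mat_hom C = 1\<^sub>m n"
      using cst.mat_hom_mult[OF Cic Cc, symmetric] CiC cst.mat_hom_one by simp
    finally show ?thesis using e2 N0'c by simp
  qed
  have rowT0: "row T0 s = row (ev0.mat_hom N0) s" if s: "s \<in> S" for s
  proof -
    have sn: "s < n" using s S by auto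
    show ?thesis
    proof (rule eq_vecI)
      fix j assume "j < dim_vec (row (ev0.mat_hom N0) s)"
      hence j: "j < n" using N0c by auto
      have "N0 $$ (s,j) = M $$ (s,j)" using arg_cong[OF rows[OF s], of "\<lambda>v. v $ j"] N0c M sn j by auto
      thus "row T0 s $ j = row (ev0.mat_hom N0) s $ j" using T0c N0c sn j s unfolding T0_def by auto
    qed (insert T0c N0c, auto)
  qed
  have rowC: "row C s = row (1\<^sub>m n) s" if s: "s \<in> S" for s
  proof -
    have sn: "s < n" using s S by auto
    have "row C s = row (ev0.mat_hom N0 * ev0.mat_hom N0') s"
      unfolding C_def using row_mult[OF T0c evN0'c sn] row_mult[OF evN0c evN0'c sn] rowT0[OF s] by simp
    thus ?thesis using evN0N0' by simp
  qed
  have rowcC: "row (cst.mat_hom C) s = row (1\<^sub>m n) s" if s: "s \<in> S" for s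
  proof -
    have sn: "s < n" using s S by auto
    show ?thesis
    proof (rule eq_vecI)
      fix j assume "j < dim_vec (row (1\<^sub>m n) s)"
      hence j: "j < n" by auto
      have "C $$ (s,j) = (1\<^sub>m n :: 'a mat) $$ (s,j)" using arg_cong[OF rowC[OF s], of "\<lambda>v. v $ j"] Cc sn j by auto
      hence "C $$ (s,j) = (if s = j then 1 else 0)" using sn j by simp
      moreover have "row (cst.mat_hom C) s $ j = [: C $$ (s,j) :]" using Cc sn j by simp
      ultimately show "row (cst.mat_hom C) s $ j = row (1\<^sub>m n) s $ j" using sn j by (simp add: one_poly_def)
    qed (insert Cc, auto)
  qed
  have rowN: "row N s = row M s" if s: "s \<in> S" for s
  proof -
    have sn: "s < n" using s S by auto
    have "row N s = row (1\<^sub>m n * N0) s"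
      unfolding N_def using row_mult[OF cCc N0c sn] row_mult[OF one_carrier_mat N0c sn] rowcC[OF s] by simp
    thus ?thesis using N0c rows[OF s] by simp
  qed
  have evcC: "ev0.mat_hom (cst.mat_hom C) = C" by (rule eq_matI) auto
  have evN: "ev0.mat_hom N = T0"
  proof -
    have "ev0.mat_hom N = C * ev0.mat_hom N0" unfolding N_def using ev0.mat_hom_mult[OF cCc N0c] evcC by simp
    also have "\<dots> = T0 * (ev0.mat_hom N0' * ev0.mat_hom N0)" unfolding C_def
      by (rule assoc_mult_mat[OF T0c evN0'c evN0c])
    finally show ?thesis using evN0'N0 T0c by simp
  qed
  have NcalM: "N \<in> calM n"
  proof -
    have "poly (N $$ (a,b)) 0 = 0" if "a < n" "b < a" for a b
    proof -
      have "poly (N $$ (a,b)) 0 = ev0.mat_hom N $$ (a,b)" using Nc that by auto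
      thus ?thesis using evN T0up that by simp
    qed
    thus ?thesis unfolding calM_def using Nc by auto
  qed
  have evNiT0: "ev0.mat_hom Ni * T0 = 1\<^sub>m n"
    using ev0.mat_hom_mult[OF Nic Nc, symmetric] NiN ev0.mat_hom_one evN by simp
  have NicalM: "Ni \<in> calM n"
  proof -
    have "poly (Ni $$ (a,b)) 0 = 0" if "a < n" "b < a" for a b
    proof -
      have "poly (Ni $$ (a,b)) 0 = ev0.mat_hom Ni $$ (a,b)" using Nic that by auto
      also have "\<dots> = 0"
        by (rule upper_inv[OF _ T0c T0up T0dg evNiT0], insert Nic that, auto)
      finally show ?thesis .
    qed
    thus ?thesis unfolding calM_def using Nic by auto
  qed
  show ?thesis
    using Nc rowN NcalM NicalM NNi NiN unfolding unit_calM_def by blast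
qed

lemma sub_mult_rows:
  assumes A: "A \<in> carrier_mat n n" and B: "B \<in> carrier_mat n n" and S: "S \<subseteq> {0..<n}"
  shows "submatrix (A * B) S UNIV = submatrix A S UNIV * B"
proof -
  have AB: "A * B \<in> carrier_mat n n" using A B by auto
  have pS: "\<And>i. i < card S \<Longrightarrow> pick S i < n" using pick_in_set_le S by (meson atLeastLessThan_iff subsetD)
  show ?thesis
  proof (rule eq_matI)
    fix i j assume ij: "i < dim_row (submatrix A S UNIV * B)" "j < dim_col (submatrix A S UNIV * B)"
    hence ij: "i < card S" "j < n" using sub_carrier_rU[OF A S] B by auto
    have "row (submatrix A S UNIV) i = row A (pick S i)"
      by (rule eq_vecI, insert sub_carrier_rU[OF A S] A ij pS, auto simp: sub_idx_rU[OF A S])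
    thus "submatrix (A * B) S UNIV $$ (i, j) = (submatrix A S UNIV * B) $$ (i, j)"
      using sub_idx_rU[OF AB S ij] sub_carrier_rU[OF A S] A B ij pS by auto
  qed (insert sub_carrier_rU[OF AB S] sub_carrier_rU[OF A S] B, auto)
qed

lemma pick_inj:
  assumes "i < card S" "j < card S" "pick S i = pick S j" shows "i = j"
  using pick_mono_le[OF assms(1), of j] pick_mono_le[OF assms(2), of i] assms(3)
  by (cases i j rule: linorder_cases) auto

theorem lemma3p14:
  fixes M :: "'a::{field,finite} poly mat" and n q :: nat
  assumes "card (UNIV :: 'a set) = q" and "n \<ge> 2" and "n dvd q - 1"
    and "M \<in> calM n" and "delay_free M"
  shows "basic (submatrix M (Supp M) UNIV) \<longleftrightarrow>
    (\<exists>N \<in> carrier_mat n n. (\<forall>i \<in> Supp M. row N i = row M i) \<and> unit_calM n N)"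
proof -
  define S where "S = Supp M"
  have M: "M \<in> carrier_mat n n" using assms(4) unfolding calM_def by auto
  have S: "S \<subseteq> {0..<n}" unfolding S_def Supp_def using M by auto
  have fS: "finite S" using S finite_subset by blast
  define k where "k = card S"
  define G where "G = submatrix M S UNIV"
  have G: "G \<in> carrier_mat k n" unfolding G_def k_def by (rule sub_carrier_rU[OF M S])
  have pS: "\<And>i. i < k \<Longrightarrow> pick S i < n" using pick_in_set_le S unfolding k_def
    by (meson atLeastLessThan_iff subsetD)
  have basic_iff: "basic G \<longleftrightarrow> (\<forall>d. (\<forall>J. J \<subseteq> {0..<n} \<and> card J = k \<longrightarrow> d dvd det (submatrix G UNIV J)) \<longrightarrow> is_unit d)"
    unfolding basic_def using G by auto
  show ?thesis unfolding S_def[symmetric] G_def[symmetric]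
  proof
    assume bas: "basic G"
    obtain U where U: "invm n U" and red: "\<forall>s\<in>S. \<forall>j<n. (j \<notin> S \<or> s < j) \<longrightarrow> (M * U) $$ (s,j) = 0"
      using reduce[OF M S] by blast
    obtain U' where Uc: "U \<in> carrier_mat n n" and U'c: "U' \<in> carrier_mat n n"
      and u1: "U * U' = 1\<^sub>m n" and u2: "U' * U = 1\<^sub>m n" using U unfolding invm_def by auto
    define X where "X = M * U"
    have X: "X \<in> carrier_mat n n" unfolding X_def using M Uc by auto
    have XU': "X * U' = M" unfolding X_def using M Uc U'c u1 by (simp add: assoc_mult_mat)
    define G' where "G' = submatrix X S UNIV"
    have G': "G' \<in> carrier_mat k n" unfolding G'_def k_def by (rule sub_carrier_rU[OF X S])
    have GG': "G = G' * U'" unfolding G_def G'_def using sub_mult_rows[OF X U'c S] XU' by simp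
    define \<pi> where "\<pi> = (\<Prod>s\<in>S. X $$ (s,s))"
    have G'idx: "G' $$ (a,b) = X $$ (pick S a, b)" if "a < k" "b < n" for a b
      unfolding G'_def using sub_idx_rU[OF X S] that unfolding k_def by auto
    have hypG': "\<pi> dvd det (submatrix G' UNIV J)" if J: "J \<subseteq> {0..<n}" "card J = k" for J
    proof -
      have SJc: "submatrix G' UNIV J \<in> carrier_mat k k" using sub_carrier_cU[OF G' J(1)] J by simp
      have pJ: "\<And>i. i < k \<Longrightarrow> pick J i < n" using pick_in_set_le J
        by (metis atLeastLessThan_iff subsetD)
      have SJidx: "submatrix G' UNIV J $$ (a,b) = X $$ (pick S a, pick J b)" if "a < k" "b < k" for a b
        using sub_idx_cU[OF G' J(1)] that J G'idx pJ by auto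
      show ?thesis
      proof (cases "J = S")
        case True
        have "det (submatrix G' UNIV J) = prod_list (diag_mat (submatrix G' UNIV J))"
        proof (rule det_lower_triangular[OF _ SJc])
          fix a b assume ab: "a < b" "b < k"
          have "pick S a < pick S b" using pick_mono_le[of b S a] ab unfolding k_def by auto
          moreover have "pick S a \<in> S" using pick_in_set_le[of a S] ab unfolding k_def by auto
          ultimately show "submatrix G' UNIV J $$ (a,b) = 0"
            using SJidx[of a b] ab red pS[of b] True unfolding X_def by auto
        qed
        also have "\<dots> = (\<Prod>a\<in>{0..<k}. X $$ (pick S a, pick S a))"
          using det_diag_prod[OF SJc] SJidx True by simp
        also have "\<dots> = \<pi>" unfolding \<pi>_def
        proof (rule prod.reindex_bij_betw)
          have inj: "inj_on (pick S) {0..<k}" using pick_inj unfolding k_def inj_on_def by auto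
          have sub: "pick S ` {0..<k} \<subseteq> S" using pick_in_set_le unfolding k_def by auto
          have "card (pick S ` {0..<k}) = card S" using card_image[OF inj] unfolding k_def by simp
          hence "pick S ` {0..<k} = S" using card_subset_eq[OF fS sub] by simp
          thus "bij_betw (pick S) {0..<k} S" using inj unfolding bij_betw_def by simp
        qed
        finally show ?thesis by simp
      next
        case False
        have "\<not> J \<subseteq> S"
        proof
          assume "J \<subseteq> S"
          hence "J = S" using card_subset_eq[OF fS] J unfolding k_def by auto
          thus False using False by simp
        qed
        then obtain j where j: "j \<in> J" "j \<notin> S" by auto
        have fJ: "finite J" using J finite_subset by blast
        define b where "b = card {a\<in>J. a < j}"
        have "{a\<in>J. a < j} \<subset> J" using j by auto
        hence bk: "b < k" unfolding b_def using psubset_card_mono[OF fJ] J by auto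
        have pb: "pick J b = j" unfolding b_def by (rule pick_card_in_set[OF j(1)])
        have jn: "j < n" using j J by auto
        have "det (submatrix G' UNIV J) = (\<Sum>i<k. submatrix G' UNIV J $$ (i, b) * cofactor (submatrix G' UNIV J) i b)"
          by (rule laplace_expansion_column[OF SJc bk])
        also have "\<dots> = 0"
        proof (rule sum.neutral, intro ballI)
          fix i assume "i \<in> {..<k}"
          hence i: "i < k" by auto
          have "pick S i \<in> S" using pick_in_set_le[of i S] i unfolding k_def by auto
          hence "X $$ (pick S i, j) = 0" using red j jn unfolding X_def by auto
          thus "submatrix G' UNIV J $$ (i, b) * cofactor (submatrix G' UNIV J) i b = 0"
            using SJidx[OF i bk] pb by simp
        qed
        finally show ?thesis by simp
      qed
    qed
    have hypG: "\<pi> dvd det (submatrix G UNIV J)" if J: "J \<subseteq> {0..<n}" "card J = k" for J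
      unfolding GG' by (rule minors_mult[OF G' U'c hypG' J])
    have upi: "is_unit \<pi>" using bas hypG unfolding basic_iff by blast
    define Q where "Q = mat n n (\<lambda>(i,j). if i \<in> S then X $$ (i,j) else if i = j then 1 else 0)"
    have Qc: "Q \<in> carrier_mat n n" unfolding Q_def by auto
    have "det Q = prod_list (diag_mat Q)"
      by (rule det_lower_triangular[OF _ Qc], insert red, auto simp: Q_def X_def)
    also have "\<dots> = (\<Prod>i\<in>{0..<n}. Q $$ (i,i))" by (rule det_diag_prod[OF Qc])
    also have "\<dots> = (\<Prod>i\<in>{0..<n}. if i \<in> S then X $$ (i,i) else 1)"
      by (rule prod.cong) (auto simp: Q_def)
    also have "\<dots> = \<pi>" unfolding \<pi>_def prod.If_cases[OF finite_atLeastLessThan]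
      using S by (simp add: Int_absorb1)
    finally have dQ: "det Q dvd 1" using upi by simp
    have Q: "invm n Q" by (rule unit_det_invm[OF Qc dQ])
    have U': "invm n U'" unfolding invm_def using Uc U'c u1 u2 by auto
    define N0 where "N0 = Q * U'"
    have N0: "invm n N0" unfolding N0_def by (rule invm_mult[OF Q U'])
    have rowN0: "row N0 s = row M s" if s: "s \<in> S" for s
    proof -
      have sn: "s < n" using s S by auto
      have rQ: "row Q s = row X s" by (rule eq_vecI, insert Qc X s sn, auto simp: Q_def)
      have "row N0 s = row (X * U') s" unfolding N0_def
        using row_mult[OF Qc U'c sn] row_mult[OF X U'c sn] rQ by simp
      thus ?thesis using XU' by simp
    qed
    have low: "poly (M $$ (a,b)) 0 = 0" if "a \<in> S" "b < a" for a b
      using assms(4) that S unfolding calM_def by auto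
    have dg: "poly (M $$ (a,a)) 0 \<noteq> 0" if "a \<in> S" for a
      using assms(5) that unfolding delay_free_def S_def by auto
    show "\<exists>N \<in> carrier_mat n n. (\<forall>i \<in> S. row N i = row M i) \<and> unit_calM n N"
      by (rule fixup[OF M S low dg N0 rowN0])
  next
    assume "\<exists>N \<in> carrier_mat n n. (\<forall>i \<in> S. row N i = row M i) \<and> unit_calM n N"
    then obtain N N' where Nc: "N \<in> carrier_mat n n" and rows: "\<forall>i \<in> S. row N i = row M i"
      and N'c: "N' \<in> carrier_mat n n" and e: "N * N' = 1\<^sub>m n"
      unfolding unit_calM_def calM_def by blast
    have GN: "G = submatrix N S UNIV"
    proof (rule eq_matI)
      fix i j assume "i < dim_row (submatrix N S UNIV)" "j < dim_col (submatrix N S UNIV)"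
      hence ij: "i < k" "j < n" using sub_carrier_rU[OF Nc S] unfolding k_def by auto
      have ps: "pick S i \<in> S" using pick_in_set_le[of i S] ij unfolding k_def by auto
      have "N $$ (pick S i, j) = M $$ (pick S i, j)"
        using arg_cong[OF bspec[OF rows ps], of "\<lambda>v. v $ j"] Nc M ij pS by auto
      thus "G $$ (i,j) = submatrix N S UNIV $$ (i,j)" unfolding G_def
        using sub_idx_rU[OF M S] sub_idx_rU[OF Nc S] ij unfolding k_def by auto
    qed (insert sub_carrier_rU[OF Nc S] G, auto simp: k_def)
    define W where "W = submatrix N' UNIV S"
    have W: "W \<in> carrier_mat n k" unfolding W_def k_def by (rule sub_carrier_cU[OF N'c S])
    have GW: "G * W = 1\<^sub>m k"
    proof (rule eq_matI)
      fix i j assume "i < dim_row (1\<^sub>m k)" "j < dim_col (1\<^sub>m k)"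
      hence ij: "i < k" "j < k" by auto
      have r: "row G i = row N (pick S i)"
        by (rule eq_vecI, insert G Nc ij pS, auto simp: GN sub_idx_rU[OF Nc S] k_def)
      have c: "col W j = col N' (pick S j)"
        by (rule eq_vecI, insert W N'c ij pS, auto simp: W_def sub_idx_cU[OF N'c S] k_def)
      have "(G * W) $$ (i,j) = (N * N') $$ (pick S i, pick S j)"
        using r c G W Nc N'c ij pS by auto
      also have "\<dots> = (if i = j then 1 else 0)" using e ij pS pick_inj[of i S j] unfolding k_def by auto
      finally show "(G * W) $$ (i,j) = 1\<^sub>m k $$ (i,j)" using ij by simp
    qed (insert G W, auto)
    show "basic G" unfolding basic_iff
    proof (intro allI impI)
      fix d assume "\<forall>J. J \<subseteq> {0..<n} \<and> card J = k \<longrightarrow> d dvd det (submatrix G UNIV J)"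
      hence "d dvd det (G * W)" by (intro CB_cols[OF G W]) auto
      thus "is_unit d" using GW by simp
    qed
  qed
qed


end
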